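(* Let $f:\mathbb R_+\to\mathbb R_+$ be continuous with $f(0)=0$ and $f(u)>0$ for $u>0$, and consider the dynamics on $S_4$ given, for a payoff matrix $U$, by $$\dot x_i=f(k_i(x))-x_i\sum_{j=1}^4 f(k_j(x)),\qquad k_i(x)=\max(0,(Ux)_i-x\cdot Ux).$$ Let $\varepsilon\in(0,1)$, let $$U_0= \begin{pmatrix} 0 & -1 & \varepsilon & 0 \\ \varepsilon & 0 & -1 & 0 \\ -1 & \varepsilon & 0 & 0 \\ \frac{-1+\varepsilon}{3} & \frac{-1+\varepsilon}{3} & \frac{-1+\varepsilon}{3} & 0 \end{pmatrix},$$ $n=(1/3,1/3,1/3,0)$ and $E_0=\{\lambda n+(1-\lambda)e_4:\lambda\in[0,1]\}$. If $C$ is a closed subset of $S_4$ disjoint from $E_0$, then there exists a neighborhood $\mathcal N$ of $U_0$ such that, for every payoff matrix $U\in\mathcal N$ and every initial condition in $C$, the solution satisfies $x_4(t)\to0$ as $t\to+\infty$.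
   Context: $S_4$ is the simplex of mixed strategies of a symmetric two-player game with four pure strategies and payoff matrix $U$; $e_4$ is its fourth vertex. *)

theory Defs
  imports "HOL-Analysis.Analysis"
begin

text \<open>Strategies are indexed by the numeral type 4; the pure strategies
  1,2,3,4 are the elements 1,2,3,4 of this type (note 4 = 0 in type 4).\<close>

definition S4 :: "(real^4) set" where
  "S4 = {x. (\<forall>i. 0 \<le> x $ i) \<and> (\<Sum>i\<in>UNIV. x $ i) = 1}"

definition e4 :: "real^4" where
  "e4 = (\<chi> i. if i = 4 then 1 else 0)"

definition nvec :: "real^4" where
  "nvec = (\<chi> i. if i = 4 then 0 else 1/3)"

definition E0 :: "(real^4) set" where
  "E0 = {l *\<^sub>R nvec + (1 - l) *\<^sub>R e4 | l. l \<in> {0..1}}"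

definition U0 :: "real \<Rightarrow> real^4^4" where
  "U0 \<epsilon> = (\<chi> i j.
     if i = 1 then (if j = 1 then 0 else if j = 2 then -1 else if j = 3 then \<epsilon> else 0)
     else if i = 2 then (if j = 1 then \<epsilon> else if j = 2 then 0 else if j = 3 then -1 else 0)
     else if i = 3 then (if j = 1 then -1 else if j = 2 then \<epsilon> else if j = 3 then 0 else 0)
     else (if j = 4 then 0 else (-1 + \<epsilon>) / 3))"

definition kfun :: "real^4^4 \<Rightarrow> real^4 \<Rightarrow> 4 \<Rightarrow> real" where
  "kfun U x i = max 0 ((U *v x) $ i - x \<bullet> (U *v x))"

definition vfield :: "(real \<Rightarrow> real) \<Rightarrow> real^4^4 \<Rightarrow> real^4 \<Rightarrow> real^4" where
  "vfield f U x = (\<chi> i. f (kfun U x i) - x $ i * (\<Sum>j\<in>UNIV. f (kfun U x j)))"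

definition is_solution :: "(real \<Rightarrow> real) \<Rightarrow> real^4^4 \<Rightarrow> (real \<Rightarrow> real^4) \<Rightarrow> bool" where
  "is_solution f U x \<longleftrightarrow>
     (\<forall>t\<ge>0. x t \<in> S4 \<and> (x has_vector_derivative vfield f U (x t)) (at t within {0..}))"

end

theory Submission
  imports Defs
begin

lemma n4: "(1::4) \<noteq> 2" "(1::4) \<noteq> 3" "(1::4) \<noteq> 4" "(2::4) \<noteq> 3" "(2::4) \<noteq> 4" "(3::4) \<noteq> 4"
  "(2::4) \<noteq> 1" "(3::4) \<noteq> 1" "(4::4) \<noteq> 1" "(3::4) \<noteq> 2" "(4::4) \<noteq> 2" "(4::4) \<noteq> 3"
  by simp_all
lemma U0_e: "U0 e $ 1 $ 1 = 0" "U0 e $ 1 $ 2 = -1" "U0 e $ 1 $ 3 = e" "U0 e $ 1 $ 4 = 0"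
  "U0 e $ 2 $ 1 = e" "U0 e $ 2 $ 2 = 0" "U0 e $ 2 $ 3 = -1" "U0 e $ 2 $ 4 = 0"
  "U0 e $ 3 $ 1 = -1" "U0 e $ 3 $ 2 = e" "U0 e $ 3 $ 3 = 0" "U0 e $ 3 $ 4 = 0"
  "U0 e $ 4 $ 1 = (e-1)/3" "U0 e $ 4 $ 2 = (e-1)/3" "U0 e $ 4 $ 3 = (e-1)/3" "U0 e $ 4 $ 4 = 0"
  unfolding U0_def by (simp_all only: vec_lambda_beta n4 if_True if_False refl, simp_all)
lemma U0_mv: "(U0 e *v x) $ 1 = - x$2 + e * x$3" "(U0 e *v x) $ 2 = e * x$1 - x$3"
  "(U0 e *v x) $ 3 = - x$1 + e * x$2" "(U0 e *v x) $ 4 = (e - 1)/3 * (x$1+x$2+x$3)"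
  unfolding matrix_vector_mult_def by (simp_all add: sum_4 U0_e algebra_simps)

definition ex :: "real^4^4 \<Rightarrow> real^4 \<Rightarrow> 4 \<Rightarrow> real" where
  "ex U x i = (U *v x) $ i - x \<bullet> (U *v x)"
definition Nf :: "real^4 \<Rightarrow> real" where
  "Nf x = (x$1 - x$2)^2 + (x$2 - x$3)^2 + (x$3 - x$1)^2"

lemma S4_sum: "x \<in> S4 \<Longrightarrow> x$4 = 1 - x$1 - x$2 - x$3"
  unfolding S4_def by (simp add: sum_4)
lemma S4_nn: "x \<in> S4 \<Longrightarrow> 0 \<le> x$i"
  unfolding S4_def by simp

lemma inner4: "x \<bullet> (y::real^4) = x$1*y$1 + x$2*y$2 + x$3*y$3 + x$4*y$4"
  by (simp add: inner_vec_def sum_4)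

lemma exU0_all:
  assumes "x \<in> S4"
  shows "ex (U0 e) x 4 = -(1-e)/6 * Nf x \<and>
  ex (U0 e) x 1 = ((1-e)*(x$1-x$2) - (1+2*e)*(x$2-x$3))/3 - (1-e)/6 * Nf x \<and>
  ex (U0 e) x 2 = ((1-e)*(x$2-x$3) - (1+2*e)*(x$3-x$1))/3 - (1-e)/6 * Nf x \<and>
  ex (U0 e) x 3 = ((1-e)*(x$3-x$1) - (1+2*e)*(x$1-x$2))/3 - (1-e)/6 * Nf x"
proof -
  have h4: "x$4 = 1 - x$1 - x$2 - x$3" using S4_sum[OF assms] .
  show ?thesis
  unfolding ex_def Nf_def inner4 U0_mv h4
  by (intro conjI; simp add: power2_eq_square field_simps algebra_simps)
qed

lemma N_le2: "x \<in> S4 \<Longrightarrow> Nf x \<le> 2"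
proof -
  assume x: "x \<in> S4"
  have h4: "x$4 = 1 - x$1 - x$2 - x$3" using S4_sum[OF x] .
  have nn: "0 \<le> x$1" "0 \<le> x$2" "0 \<le> x$3" "0 \<le> x$4" using S4_nn[OF x] by auto
  have p: "0 \<le> x$1 * x$2" "0 \<le> x$2 * x$3" "0 \<le> x$3 * x$1" using nn by auto
  have "Nf x \<le> 2 * (x$1^2 + x$2^2 + x$3^2)" unfolding Nf_def using p
    by (simp add: power2_eq_square algebra_simps)
  also have "\<dots> \<le> 2 * (x$1 + x$2 + x$3)^2" using p by (simp add: power2_eq_square algebra_simps)
  also have "(x$1 + x$2 + x$3) \<le> 1" using nn h4 by simp
  then have "(x$1 + x$2 + x$3)^2 \<le> 1" using nn by (simp add: power_le_one)
  finally show ?thesis by simp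
qed

lemma N_nn: "0 \<le> Nf x" unfolding Nf_def by simp

lemma ex_sq_aux:
  fixes a b e N :: real
  assumes "0 < e" "e < 1" "N = a^2 + b^2 + (a+b)^2" "N \<le> 2"
  shows "(((1-e)*a - (1+2*e)*b)/3 - (1-e)/6 * N)^2 \<le> 3 * N"
proof -
  define L where "L = ((1-e)*a - (1+2*e)*b)/3"
  have ee: "e * e \<le> 1" using assms by (simp add: mult_le_one)
  have c: "(1-e)^2 + (1+2*e)^2 \<le> 9" using assms ee by (simp add: power2_eq_square algebra_simps)
  have id: "((1-e)*a - (1+2*e)*b)^2 + ((1-e)*b + (1+2*e)*a)^2 = ((1-e)^2 + (1+2*e)^2) * (a^2+b^2)"
    by (simp add: power2_eq_square algebra_simps)
  have "((1-e)*a - (1+2*e)*b)^2 \<le> ((1-e)^2 + (1+2*e)^2) * (a^2+b^2)"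
    using id zero_le_power2[of "(1-e)*b + (1+2*e)*a"] by linarith
  also have "\<dots> \<le> 9 * (a^2+b^2)" using c by (intro mult_right_mono) auto
  finally have L2: "L^2 \<le> a^2 + b^2" unfolding L_def by (simp add: power_divide)
  have LN: "L^2 \<le> N" using L2 assms(3) zero_le_power2[of "a+b"] by linarith
  have N0: "0 \<le> N" using assms(3) by simp
  define t where "t = (1-e)/6 * N"
  have "(1-e) * N \<le> N" using N0 assms(1,2) by (intro mult_left_le_one_le) auto
  then have t0: "0 \<le> t" "t \<le> N/6" using assms N0 unfolding t_def by auto
  have "t^2 \<le> N/6 * (N/6)" unfolding power2_eq_square by (rule mult_mono) (use t0 in linarith)+
  also have "\<dots> \<le> N/6" using N0 assms(4) by (intro mult_left_le) auto
  finally have t2: "t^2 \<le> N/6" .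
  have "2*L^2 + 2*t^2 - (L - t)^2 = (L+t)^2" by (simp add: power2_eq_square algebra_simps)
  then have "(L - t)^2 \<le> 2*L^2 + 2*t^2" using zero_le_power2[of "L+t"] by linarith
  then show ?thesis using LN t2 N0 unfolding L_def[symmetric] t_def[symmetric] by linarith
qed

lemma exU0_facts:
  assumes x: "x \<in> S4" and e: "0 < e" "e < 1"
  shows "ex (U0 e) x 4 = -(1-e)/6 * Nf x"
    "ex (U0 e) x 1 + ex (U0 e) x 2 + ex (U0 e) x 3 = -(1-e)/2 * Nf x"
    "x$3 * ex (U0 e) x 1 + x$1 * ex (U0 e) x 2 + x$2 * ex (U0 e) x 3 \<ge> e/2 * Nf x"
    "(ex (U0 e) x 1)^2 \<le> 3 * Nf x" "(ex (U0 e) x 2)^2 \<le> 3 * Nf x" "(ex (U0 e) x 3)^2 \<le> 3 * Nf x"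
proof -
  note X = exU0_all[OF x, of e]
  note X4 = X[THEN conjunct1] and X1 = X[THEN conjunct2, THEN conjunct1]
    and X2 = X[THEN conjunct2, THEN conjunct2, THEN conjunct1]
    and X3 = X[THEN conjunct2, THEN conjunct2, THEN conjunct2]
  have h4: "x$4 = 1 - x$1 - x$2 - x$3" using S4_sum[OF x] .
  have nn: "0 \<le> x$1" "0 \<le> x$2" "0 \<le> x$3" "0 \<le> x$4" using S4_nn[OF x] by auto
  show "ex (U0 e) x 4 = -(1-e)/6 * Nf x" using X by simp
  show "ex (U0 e) x 1 + ex (U0 e) x 2 + ex (U0 e) x 3 = -(1-e)/2 * Nf x"
    unfolding X1 X2 X3 by (simp add: field_simps)
  have idw: "x$3 * ex (U0 e) x 1 + x$1 * ex (U0 e) x 2 + x$2 * ex (U0 e) x 3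
     = e/2 * Nf x + (1-e)/6 * Nf x * x$4"
    unfolding X1 X2 X3 unfolding h4 Nf_def by (simp add: power2_eq_square field_simps algebra_simps)
  have "0 \<le> (1-e)/6 * Nf x * x$4" using e nn N_nn[of x] by simp
  then show "x$3 * ex (U0 e) x 1 + x$1 * ex (U0 e) x 2 + x$2 * ex (U0 e) x 3 \<ge> e/2 * Nf x"
    using idw by linarith
  have N2: "Nf x \<le> 2" using N_le2[OF x] .
  show "(ex (U0 e) x 1)^2 \<le> 3 * Nf x" unfolding X1 using ex_sq_aux[OF e, of "Nf x" "x$1-x$2" "x$2-x$3"] N2
    unfolding Nf_def by (simp add: power2_eq_square algebra_simps)
  show "(ex (U0 e) x 2)^2 \<le> 3 * Nf x" unfolding X2 using ex_sq_aux[OF e, of "Nf x" "x$2-x$3" "x$3-x$1"] N2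
    unfolding Nf_def by (simp add: power2_eq_square algebra_simps)
  show "(ex (U0 e) x 3)^2 \<le> 3 * Nf x" unfolding X3 using ex_sq_aux[OF e, of "Nf x" "x$3-x$1" "x$1-x$2"] N2
    unfolding Nf_def by (simp add: power2_eq_square algebra_simps)
qed


definition av :: "(real \<Rightarrow> real) \<Rightarrow> real^4^4 \<Rightarrow> real^4 \<Rightarrow> real^4" where
  "av f U x = (\<chi> i. f (kfun U x i))"
definition Fs :: "(real \<Rightarrow> real) \<Rightarrow> real^4^4 \<Rightarrow> real^4 \<Rightarrow> real" where
  "Fs f U x = (\<Sum>j\<in>UNIV. f (kfun U x j))"
definition Gf :: "(real \<Rightarrow> real) \<Rightarrow> real^4^4 \<Rightarrow> real^4 \<Rightarrow> real" where
  "Gf f U x = (\<Sum>i\<in>UNIV. f (kfun U x i) * ((U *v vfield f U x) $ i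
      - vfield f U x \<bullet> (U *v x) - x \<bullet> (U *v vfield f U x)))"

lemma kfun_ex: "kfun U x i = max 0 (ex U x i)"
  unfolding kfun_def ex_def ..

lemma vfield_alt: "vfield f U x = av f U x - Fs f U x *\<^sub>R x"
  unfolding vfield_def av_def Fs_def by (simp add: vec_eq_iff algebra_simps)

lemma inner_av: "av f U x \<bullet> y = (\<Sum>i\<in>UNIV. f (kfun U x i) * y $ i)"
  unfolding av_def inner_vec_def by simp

lemma Gf_alt: "Gf f U x = vfield f U x \<bullet> (U *v vfield f U x)
   - Fs f U x * (\<Sum>i\<in>UNIV. f (kfun U x i) * ex U x i)"
proof -
  define z where "z = vfield f U x"
  define F where "F = Fs f U x"
  define a where "a = av f U x"
  have za: "a = z + F *\<^sub>R x" unfolding z_def F_def a_def vfield_alt by simp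
  have "Gf f U x = a \<bullet> (U *v z) - F * (z \<bullet> (U *v x)) - F * (x \<bullet> (U *v z))"
    unfolding Gf_def inner_av a_def F_def Fs_def z_def
    by (simp add: right_diff_distrib sum_subtractf algebra_simps sum.distrib sum_distrib_right)
  also have "a \<bullet> (U *v z) = z \<bullet> (U *v z) + F * (x \<bullet> (U *v z))" unfolding za
    by (simp add: inner_add_left)
  finally have 1: "Gf f U x = z \<bullet> (U *v z) - F * (z \<bullet> (U *v x))" by simp
  have "z \<bullet> (U *v x) = a \<bullet> (U *v x) - F * (x \<bullet> (U *v x))"
    unfolding za by (simp add: inner_add_left)
  also have "\<dots> = (\<Sum>i\<in>UNIV. f (kfun U x i) * ex U x i)"
    unfolding a_def inner_av F_def Fs_def ex_def
    by (simp add: right_diff_distrib sum_subtractf sum_distrib_right)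
  finally show ?thesis using 1 unfolding z_def F_def by simp
qed


lemma sq_half: "(p - d)^2 \<ge> p^2/2 - d^2" for p d :: real
proof -
  have "2*(p-d)^2 - p^2 + 2*d^2 = (p - 2*d)^2" by (simp add: power2_eq_square algebra_simps)
  then show ?thesis using zero_le_power2[of "p - 2*d"] by linarith
qed

lemma G_aux:
  fixes a1 a2 a3 F x1 x2 x3 e \<kappa> N S :: real
  assumes F: "F = a1 + a2 + a3" and a: "0 \<le> a1" "0 \<le> a2" "0 \<le> a3"
    and z: "a1 = 0 \<or> a2 = 0 \<or> a3 = 0"
    and N: "N = (x1-x2)^2 + (x2-x3)^2 + (x3-x1)^2" "N \<le> 1/8"
    and S: "S \<le> F * \<kappa>" and k: "\<kappa> = (1-e)/96" and e: "0 < e" "e < 1" and Fp: "F > 0"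
  shows "(1-e)/6 * (((a1 - x1*F) - (a2 - x2*F))^2 + ((a2 - x2*F) - (a3 - x3*F))^2
            + ((a3 - x3*F) - (a1 - x1*F))^2) - F * S \<ge> (1-e)/96 * F^2"
proof -
  have p: "(a1-a2)^2 + (a2-a3)^2 + (a3-a1)^2 \<ge> F^2/2"
  proof -
    have q: "(u+v)^2 \<le> 2*(u^2+v^2)" for u v :: real
      using zero_le_power2[of "u-v"] by (simp add: power2_eq_square algebra_simps)
    show ?thesis using z
    proof (elim disjE)
      assume h: "a1 = 0"
      have "(a1-a2)^2 = a2^2" "(a3-a1)^2 = a3^2" "F^2 = (a2 + a3)^2" using h F by (simp_all add: power2_eq_square)
      moreover have "(a2 + a3)^2 \<le> 2 * a2^2 + 2 * a3^2" using q[of a2 a3] by simp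
      ultimately show ?thesis using zero_le_power2[of "a2-a3"] by linarith
    next
      assume h: "a2 = 0"
      have "(a1-a2)^2 = a1^2" "(a2-a3)^2 = a3^2" "F^2 = (a1 + a3)^2" using h F by (simp_all add: power2_eq_square)
      moreover have "(a1 + a3)^2 \<le> 2 * a1^2 + 2 * a3^2" using q[of a1 a3] by simp
      ultimately show ?thesis using zero_le_power2[of "a3-a1"] by linarith
    next
      assume h: "a3 = 0"
      have "(a2-a3)^2 = a2^2" "(a3-a1)^2 = a1^2" "F^2 = (a1 + a2)^2" using h F by (simp_all add: power2_eq_square)
      moreover have "(a1 + a2)^2 \<le> 2 * a1^2 + 2 * a2^2" using q[of a1 a2] by simp
      ultimately show ?thesis using zero_le_power2[of "a1-a2"] by linarith
    qed
  qed
  have r: "((a1 - x1*F) - (a2 - x2*F))^2 = ((a1-a2) - (x1-x2)*F)^2"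
          "((a2 - x2*F) - (a3 - x3*F))^2 = ((a2-a3) - (x2-x3)*F)^2"
          "((a3 - x3*F) - (a1 - x1*F))^2 = ((a3-a1) - (x3-x1)*F)^2"
    by (simp_all add: algebra_simps)
  have dsum: "((x1-x2)*F)^2 + ((x2-x3)*F)^2 + ((x3-x1)*F)^2 = N * F^2"
    unfolding N by (simp add: power2_eq_square algebra_simps)
  define D where "D = ((a1 - x1*F) - (a2 - x2*F))^2 + ((a2 - x2*F) - (a3 - x3*F))^2
            + ((a3 - x3*F) - (a1 - x1*F))^2"
  have "D \<ge> F^2/4 - N * F^2"
    unfolding D_def r using sq_half[of "a1-a2" "(x1-x2)*F"] sq_half[of "a2-a3" "(x2-x3)*F"]
      sq_half[of "a3-a1" "(x3-x1)*F"] p dsum by linarith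
  moreover have "N * F^2 \<le> 1/8 * F^2" using N(2) by (intro mult_right_mono) auto
  ultimately have D8: "D \<ge> F^2/8" by linarith
  have e0: "0 \<le> (1-e)/6" using e by simp
  have "(1-e)/6 * D \<ge> (1-e)/6 * (F^2/8)" using mult_left_mono[OF D8 e0] .
  then have h1: "(1-e)*D/6 \<ge> ((1-e)*F^2)/48" by simp
  have "F * S \<le> F * (F * \<kappa>)" using S Fp by (intro mult_left_mono) auto
  then have h2: "F * S \<le> ((1-e)*F^2)/96" unfolding k by (simp add: power2_eq_square mult.commute mult.left_commute)
  have g1: "(1-e)/6 * D - F * S = ((1-e)*D)/6 - F*S" by simp
  have g2: "(1-e)/96 * F^2 = ((1-e)*F^2)/96" by simp
  show ?thesis unfolding D_def[symmetric] g1 g2 using h1 h2 by linarith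
qed


lemma quadU0: assumes h: "z$4 = -(z$1+z$2+z$3)"
  shows "z \<bullet> (U0 e *v z) = (1-e)/6 * ((z$1-z$2)^2 + (z$2-z$3)^2 + (z$3-z$1)^2)"
  unfolding inner4 U0_mv h by (simp add: power2_eq_square field_simps)

lemma vfield_comp: "vfield f U x $ i = f (kfun U x i) - x$i * Fs f U x"
  unfolding vfield_def Fs_def by simp

lemma G0_pos:
  assumes f0: "f 0 = 0" and fnn: "\<forall>u\<ge>0. f u \<ge> 0" and fpos: "\<forall>u>0. f u > 0"
    and e: "0 < e" "e < 1" and x: "x \<in> S4"
    and N: "0 < Nf x" "Nf x \<le> 1/8" "3 * Nf x \<le> ((1-e)/96)^2"
  shows "Gf f (U0 e) x > 0"
proof -
  define E where "E i = ex (U0 e) x i" for i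
  define a where "a i = f (kfun (U0 e) x i)" for i
  define F where "F = Fs f (U0 e) x"
  define \<kappa> where "\<kappa> = (1-e)/96"
  note EF = exU0_facts[OF x e, folded E_def]
  have ka: "kfun (U0 e) x i = max 0 (E i)" for i unfolding E_def kfun_ex ..
  have a0: "0 \<le> a i" for i unfolding a_def using fnn by (simp add: kfun_def)
  have "E 4 = -((1-e) * Nf x)/6" unfolding EF(1) by (simp add: field_simps)
  moreover have "0 \<le> (1-e) * Nf x" using e N_nn[of x] by simp
  ultimately have E4: "E 4 \<le> 0" by linarith
  then have a4: "a 4 = 0" unfolding a_def ka using f0 by simp
  have F4: "F = a 1 + a 2 + a 3 + a 4" unfolding F_def Fs_def a_def sum_4 ..
  have kp: "0 \<le> \<kappa>" unfolding \<kappa>_def using e by simp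
  have Ek: "E i \<le> \<kappa>" if "i \<in> {1,2,3}" for i
  proof -
    have "(E i)^2 \<le> \<kappa>^2" using that EF(4-6) N(3) unfolding \<kappa>_def by auto
    then show ?thesis using power2_le_imp_le kp by blast
  qed
  have aE: "a i * E i \<le> a i * \<kappa>" if "i \<in> {1,2,3}" for i
    using Ek[OF that] a0[of i] by (simp add: mult_left_mono)
  define S where "S = a 1 * E 1 + a 2 * E 2 + a 3 * E 3 + a 4 * E 4"
  have SF: "S \<le> F * \<kappa>" unfolding S_def F4 a4 using aE[of 1] aE[of 2] aE[of 3]
    by (simp add: algebra_simps)
  have zero: "a 1 = 0 \<or> a 2 = 0 \<or> a 3 = 0"
  proof -
    have "E 1 + E 2 + E 3 = -((1-e) * Nf x)/2" unfolding EF(2) by (simp add: field_simps)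
    moreover have "0 < (1-e) * Nf x" using e N(1) by simp
    ultimately have "E 1 + E 2 + E 3 < 0" by linarith
    then have "E 1 \<le> 0 \<or> E 2 \<le> 0 \<or> E 3 \<le> 0" by linarith
    then show ?thesis unfolding a_def ka using f0 by auto
  qed
  have Fp: "F > 0"
  proof -
    have nn: "0 \<le> x$1" "0 \<le> x$2" "0 \<le> x$3" using S4_nn[OF x] by auto
    have "e/2 * Nf x > 0" using N(1) e by simp
    then have "x$3 * E 1 + x$1 * E 2 + x$2 * E 3 > 0" using EF(3) by linarith
    then have "E 1 > 0 \<or> E 2 > 0 \<or> E 3 > 0"
      using nn mult_nonneg_nonpos[of "x$3" "E 1"] mult_nonneg_nonpos[of "x$1" "E 2"]
        mult_nonneg_nonpos[of "x$2" "E 3"] by linarith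
    then have "a 1 > 0 \<or> a 2 > 0 \<or> a 3 > 0" unfolding a_def ka using fpos by auto
    then show ?thesis unfolding F4 using a0[of 1] a0[of 2] a0[of 3] a0[of 4] by linarith
  qed
  define z where "z = vfield f (U0 e) x"
  have zc: "z$i = a i - x$i * F" for i unfolding z_def vfield_comp a_def F_def ..
  have h4: "x$4 = 1 - x$1 - x$2 - x$3" using S4_sum[OF x] .
  have z4: "z$4 = -(z$1+z$2+z$3)" unfolding zc a4 F4 h4 by (simp add: algebra_simps)
  have G: "Gf f (U0 e) x = (1-e)/6 * ((z$1-z$2)^2 + (z$2-z$3)^2 + (z$3-z$1)^2) - F * S"
  proof -
    have "Gf f (U0 e) x = z \<bullet> (U0 e *v z) - F * S"
      unfolding Gf_alt sum_4 S_def F_def a_def E_def z_def ..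
    then show ?thesis using quadU0[OF z4] by simp
  qed
  have "Gf f (U0 e) x \<ge> (1-e)/96 * F^2"
    unfolding G zc
    by (rule G_aux[OF F4[unfolded a4, simplified] a0 a0 a0 zero _ N(2) SF \<kappa>_def e Fp])
      (simp add: Nf_def)
  moreover have "(1-e)/96 * F^2 > 0" using e Fp by simp
  ultimately show ?thesis by linarith
qed



definition Psi :: "(real \<Rightarrow> real) \<Rightarrow> real \<Rightarrow> real" where
  "Psi f u = integral {-1..u} (\<lambda>s. f (max 0 s))"

lemma Psi_zero: assumes "f 0 = 0" "u \<le> 0" shows "Psi f u = 0"
proof -
  have "Psi f u = integral {-1..u} (\<lambda>s. 0::real)"
    unfolding Psi_def by (rule integral_cong) (use assms in auto)
  then show ?thesis by simp
qed

lemma Psi_deriv: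
  assumes fc: "continuous_on {0..} f" and f0: "f 0 = 0"
  shows "(Psi f has_real_derivative f (max 0 u)) (at u)"
proof (cases "u < 0")
  case True
  have "((\<lambda>_. 0) has_real_derivative 0) (at u)" by simp
  then have "(Psi f has_real_derivative 0) (at u)"
    by (rule has_field_derivative_transform_within_open[where S="{..<0}"])
      (use True Psi_zero[of f, OF f0] in auto)
  then show ?thesis using True f0 by simp
next
  case False
  have gc: "continuous_on UNIV (\<lambda>s. f (max 0 s))"
    by (rule continuous_on_compose2[OF fc]) (auto intro!: continuous_intros)
  have "((\<lambda>v. integral {-1..v} (\<lambda>s. f (max 0 s))) has_real_derivative f (max 0 u))
          (at u within {-1..u+1})"
    by (rule integral_has_real_derivative) (use gc False in \<open>auto intro: continuous_on_subset\<close>)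
  moreover have "at u within {-1..u+1} = at u"
    by (rule at_within_interior) (use False in auto)
  ultimately show ?thesis unfolding Psi_def[abs_def] by simp
qed

lemma Psi_cont: assumes "continuous_on {0..} f" "f 0 = 0" shows "continuous_on UNIV (Psi f)"
  using Psi_deriv[OF assms] by (meson DERIV_isCont continuous_at_imp_continuous_on)

lemma Psi_mvt:
  assumes fc: "continuous_on {0..} f" and f0: "f 0 = 0" and u: "0 < u"
  shows "\<exists>s>0. s < u \<and> Psi f u = u * f s"
proof -
  obtain s where "s > 0" "s < u" "Psi f u - Psi f 0 = (u - 0) * f (max 0 s)"
    using MVT2[OF u, of "Psi f" "\<lambda>v. f (max 0 v)"] Psi_deriv[OF fc f0] by blast
  then show ?thesis using Psi_zero[of f 0, OF f0] by (intro exI[of _ s]) auto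
qed

lemma Psi_nonneg:
  assumes fc: "continuous_on {0..} f" and f0: "f 0 = 0" and fnn: "\<forall>u\<ge>0. f u \<ge> 0"
  shows "0 \<le> Psi f u"
proof (cases "u \<le> 0")
  case True then show ?thesis using Psi_zero[of f, OF f0] by simp
next
  case False
  then obtain s where "s > 0" "Psi f u = u * f s" using Psi_mvt[OF fc f0, of u] by auto
  then show ?thesis using fnn False by simp
qed

lemma Psi_pos:
  assumes fc: "continuous_on {0..} f" and f0: "f 0 = 0" and fpos: "\<forall>u>0. f u > 0" and u: "u > 0"
  shows "0 < Psi f u"
proof -
  obtain s where "s > 0" "Psi f u = u * f s" using Psi_mvt[OF fc f0 u] by auto
  then show ?thesis using fpos u by simp
qed

lemma Psi_le:
  assumes fc: "continuous_on {0..} f" and f0: "f 0 = 0" and B: "\<forall>s\<in>{0..1}. f s \<le> B"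
    and u: "0 \<le> u" "u \<le> 1" and B0: "0 \<le> B"
  shows "Psi f u \<le> u * B"
proof (cases "u = 0")
  case True then show ?thesis using Psi_zero[of f, OF f0] by simp
next
  case False
  then obtain s where "s > 0" "s < u" "Psi f u = u * f s" using Psi_mvt[OF fc f0, of u] u by auto
  moreover have "f s \<le> B" using B \<open>s > 0\<close> \<open>s < u\<close> u by auto
  ultimately show ?thesis using u by (simp add: mult_left_mono)
qed

lemma ex_deriv:
  assumes d: "(x has_vector_derivative z) (at t within s)"
  shows "((\<lambda>t. ex U (x t) i) has_real_derivative
            ((U *v z)$i - z \<bullet> (U *v x t) - x t \<bullet> (U *v z))) (at t within s)"
proof -
  have d0: "(x has_derivative (\<lambda>h. h *\<^sub>R z)) (at t within s)"
    using d unfolding has_vector_derivative_def .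
  have bl: "bounded_linear (\<lambda>v. (U *v v) $ i)"
    by (rule bounded_linear_compose[OF bounded_linear_vec_nth matrix_vector_mul_bounded_linear])
  have d1: "((\<lambda>t. (U *v x t) $ i) has_derivative (\<lambda>h. (U *v (h *\<^sub>R z)) $ i)) (at t within s)"
    using bounded_linear.has_derivative[OF bl d0] .
  have d2: "((\<lambda>t. U *v x t) has_derivative (\<lambda>h. U *v (h *\<^sub>R z))) (at t within s)"
    using bounded_linear.has_derivative[OF matrix_vector_mul_bounded_linear d0] .
  note d3 = has_derivative_inner[OF d0 d2]
  have "((\<lambda>t. ex U (x t) i) has_derivative
     (\<lambda>h. (U *v (h *\<^sub>R z)) $ i - (x t \<bullet> (U *v (h *\<^sub>R z)) + (h *\<^sub>R z) \<bullet> (U *v x t)))) (at t within s)"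
    unfolding ex_def by (rule has_derivative_diff[OF d1 d3])
  then show ?thesis unfolding has_field_derivative_def
    by (rule has_derivative_eq_rhs) (auto simp: matrix_vector_mult_scaleR algebra_simps)
qed

definition Gam :: "(real \<Rightarrow> real) \<Rightarrow> real^4^4 \<Rightarrow> real^4 \<Rightarrow> real" where
  "Gam f U x = (\<Sum>i\<in>UNIV. Psi f (ex U x i))"

lemma Gam_deriv:
  assumes fc: "continuous_on {0..} f" and f0: "f 0 = 0"
    and d: "(x has_vector_derivative vfield f U (x t)) (at t within s)"
  shows "((\<lambda>t. Gam f U (x t)) has_real_derivative Gf f U (x t)) (at t within s)"
proof -
  have "((\<lambda>t. \<Sum>i\<in>UNIV. Psi f (ex U (x t) i)) has_real_derivative
     (\<Sum>i\<in>UNIV. f (max 0 (ex U (x t) i)) * ((U *v vfield f U (x t))$i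
       - vfield f U (x t) \<bullet> (U *v x t) - x t \<bullet> (U *v vfield f U (x t))))) (at t within s)"
    by (rule DERIV_sum, rule DERIV_chain'[OF ex_deriv[OF d] Psi_deriv[OF fc f0]])
  then show ?thesis unfolding Gam_def Gf_def kfun_ex .
qed


lemma cont_mv[continuous_intros]:
  fixes A :: "'a::topological_space \<Rightarrow> real^4^4" and v :: "'a \<Rightarrow> real^4"
  assumes "continuous_on S A" "continuous_on S v"
  shows "continuous_on S (\<lambda>p. A p *v v p)"
  unfolding matrix_vector_mult_def
  by (intro continuous_intros assms)

lemma cont_ex: "continuous_on S (\<lambda>p::(real^4^4) \<times> (real^4). ex (fst p) (snd p) i)"
  unfolding ex_def by (intro continuous_intros)

lemma cont_fk:
  assumes fc: "continuous_on {0..} f"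
  shows "continuous_on S (\<lambda>p::(real^4^4) \<times> (real^4). f (kfun (fst p) (snd p) i))"
  unfolding kfun_ex
  by (rule continuous_on_compose2[OF fc]) (auto intro!: continuous_intros cont_ex)

lemma cont_Fs:
  assumes fc: "continuous_on {0..} f"
  shows "continuous_on S (\<lambda>p::(real^4^4) \<times> (real^4). Fs f (fst p) (snd p))"
  unfolding Fs_def by (intro continuous_intros cont_fk[OF fc])

lemma cont_vfield:
  assumes fc: "continuous_on {0..} f"
  shows "continuous_on S (\<lambda>p::(real^4^4) \<times> (real^4). vfield f (fst p) (snd p))"
  unfolding vfield_def by (intro continuous_intros cont_fk[OF fc])

lemma cont_Gf:
  assumes fc: "continuous_on {0..} f"
  shows "continuous_on S (\<lambda>p::(real^4^4) \<times> (real^4). Gf f (fst p) (snd p))"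
  unfolding Gf_def by (intro continuous_intros cont_fk[OF fc] cont_vfield[OF fc])

lemma cont_Gam:
  assumes fc: "continuous_on {0..} f" and f0: "f 0 = 0"
  shows "continuous_on S (\<lambda>p::(real^4^4) \<times> (real^4). Gam f (fst p) (snd p))"
  unfolding Gam_def
  by (intro continuous_intros continuous_on_compose2[OF Psi_cont[OF fc f0] cont_ex]) auto

lemma unif_close:
  fixes h :: "(real^4^4) \<times> (real^4) \<Rightarrow> real"
  assumes K: "compact K" and hc: "continuous_on UNIV h" and eta: "\<eta> > 0"
  shows "\<exists>\<delta>>0. \<forall>U x. dist U V0 < \<delta> \<longrightarrow> x \<in> K \<longrightarrow> \<bar>h (U,x) - h (V0,x)\<bar> < \<eta>"
proof -
  have "compact (cball V0 1 \<times> K)" using K by (intro compact_Times) auto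
  then have "uniformly_continuous_on (cball V0 1 \<times> K) h"
    by (intro compact_uniformly_continuous continuous_on_subset[OF hc]) auto
  then obtain d where d: "d > 0" and
    hd: "\<forall>p\<in>cball V0 1 \<times> K. \<forall>p'\<in>cball V0 1 \<times> K. dist p' p < d \<longrightarrow> dist (h p') (h p) < \<eta>"
    unfolding uniformly_continuous_on_def using eta by blast
  show ?thesis
  proof (intro exI[of _ "min d 1"] conjI allI impI)
    fix U x assume U: "dist U V0 < min d 1" and x: "x \<in> K"
    have "dist (U, x) (V0, x) = dist U V0" by (simp add: dist_Pair_Pair)
    moreover have "(U,x) \<in> cball V0 1 \<times> K" "(V0,x) \<in> cball V0 1 \<times> K" using U x
      by (auto simp: dist_commute)
    ultimately have "dist (h (U,x)) (h (V0,x)) < \<eta>" using hd U by auto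
    then show "\<bar>h (U,x) - h (V0,x)\<bar> < \<eta>" by (simp add: dist_real_def)
  qed (use d in auto)
qed

lemma pos_min:
  fixes h :: "'a::metric_space \<Rightarrow> real"
  assumes "compact K" "continuous_on K h" "\<forall>x\<in>K. h x > 0"
  shows "\<exists>m>0. \<forall>x\<in>K. h x \<ge> m"
proof (cases "K = {}")
  case True then show ?thesis by (intro exI[of _ 1]) auto
next
  case False
  then obtain y where "y \<in> K" "\<forall>x\<in>K. h y \<le> h x"
    using continuous_attains_inf[OF assms(1) False assms(2)] by blast
  then show ?thesis using assms(3) by (intro exI[of _ "h y"]) auto
qed



lemma cont_Nf: "continuous_on S Nf"
  unfolding Nf_def by (intro continuous_intros)

lemma compact_S4: "compact S4"
proof -
  have "S4 = {x. \<forall>i. 0 \<le> x $ i} \<inter> {x. (\<Sum>i\<in>UNIV. x $ i) = 1}" unfolding S4_def by auto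
  moreover have "closed {x::real^4. \<forall>i. 0 \<le> x $ i}"
    by (intro closed_Collect_all closed_Collect_le continuous_intros)
  moreover have "closed {x::real^4. (\<Sum>i\<in>UNIV. x $ i) = 1}"
    by (intro closed_Collect_eq continuous_intros)
  ultimately have cl: "closed S4" by (metis closed_Int)
  have "norm x \<le> 1" if "x \<in> S4" for x
  proof -
    have "norm x \<le> (\<Sum>i\<in>UNIV. \<bar>x $ i\<bar>)" by (rule norm_le_l1_cart)
    also have "\<dots> = (\<Sum>i\<in>UNIV. x $ i)" using that unfolding S4_def by simp
    also have "\<dots> = 1" using that unfolding S4_def by simp
    finally show ?thesis .
  qed
  then have "bounded S4" unfolding bounded_iff by blast
  then show ?thesis using cl by (simp add: compact_eq_bounded_closed)
qed

lemma compact_S4_N: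
  assumes "closed {x::real^4. P x}" shows "compact (S4 \<inter> {x. P x})"
  using compact_S4 assms by (rule compact_Int_closed)

lemma closed_N_ge: "closed {x. a \<le> Nf x}"
  by (intro closed_Collect_le continuous_intros cont_Nf)
lemma closed_N_le: "closed {x. Nf x \<le> a}"
  by (intro closed_Collect_le continuous_intros cont_Nf)
lemma closed_N_between: "closed {x. a \<le> Nf x \<and> Nf x \<le> b}"
  by (intro closed_Collect_conj closed_Collect_le continuous_intros cont_Nf)

lemma N0_E0:
  assumes x: "x \<in> S4" and N: "Nf x = 0"
  shows "x \<in> E0"
proof -
  have h4: "x$4 = 1 - x$1 - x$2 - x$3" using S4_sum[OF x] .
  have nn: "0 \<le> x$1" "0 \<le> x$4" using S4_nn[OF x] by auto
  have "(x$1 - x$2)^2 = 0" "(x$2 - x$3)^2 = 0" using N unfolding Nf_def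
    by (smt (verit) zero_le_power2)+
  then have e: "x$2 = x$1" "x$3 = x$1" by auto
  define l where "l = 3 * x$1"
  have l: "l \<in> {0..1}" using nn h4 e unfolding l_def by auto
  have "x = l *\<^sub>R nvec + (1 - l) *\<^sub>R e4"
    unfolding vec_eq_iff forall_4 nvec_def e4_def l_def using h4 e n4 by simp
  then show ?thesis unfolding E0_def using l by blast
qed

lemma exU0_pos:
  assumes x: "x \<in> S4" and e: "0 < e" "e < 1" and N: "0 < Nf x"
  shows "ex (U0 e) x 1 > 0 \<or> ex (U0 e) x 2 > 0 \<or> ex (U0 e) x 3 > 0"
proof -
  note EF = exU0_facts[OF x e]
  have nn: "0 \<le> x$1" "0 \<le> x$2" "0 \<le> x$3" using S4_nn[OF x] by auto
  have "e/2 * Nf x > 0" using N e by simp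
  then have "x$3 * ex (U0 e) x 1 + x$1 * ex (U0 e) x 2 + x$2 * ex (U0 e) x 3 > 0" using EF(3) by linarith
  then show ?thesis
    using nn mult_nonneg_nonpos[of "x$3" "ex (U0 e) x 1"] mult_nonneg_nonpos[of "x$1" "ex (U0 e) x 2"]
      mult_nonneg_nonpos[of "x$2" "ex (U0 e) x 3"] by linarith
qed

lemma exU0_4: assumes x: "x \<in> S4" and e: "0 < e" "e < 1" shows "ex (U0 e) x 4 \<le> 0"
proof -
  have "ex (U0 e) x 4 = -((1-e) * Nf x)/6" unfolding exU0_facts(1)[OF x e] by (simp add: field_simps)
  moreover have "0 \<le> (1-e) * Nf x" using e N_nn[of x] by simp
  ultimately show ?thesis by linarith
qed

lemma comp_deriv:
  assumes d: "(x has_vector_derivative z) (at t within s)"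
  shows "((\<lambda>t. x t $ i) has_real_derivative z $ i) (at t within s)"
proof -
  have "(x has_derivative (\<lambda>h. h *\<^sub>R z)) (at t within s)"
    using d unfolding has_vector_derivative_def .
  from bounded_linear.has_derivative[OF bounded_linear_vec_nth this]
  show ?thesis unfolding has_field_derivative_def
    by (rule has_derivative_eq_rhs) (auto simp: mult.commute)
qed


lemma cont_at_U:
  fixes h :: "(real^4^4) \<times> (real^4) \<Rightarrow> real"
  assumes "continuous_on UNIV h"
  shows "continuous_on S (\<lambda>x. h (V, x))"
  by (rule continuous_on_compose2[OF assms]) (auto intro!: continuous_intros)

theorem proposition5:
  fixes f :: "real \<Rightarrow> real" and \<epsilon> :: real and C :: "(real^4) set"
  assumes "continuous_on {0..} f"
    and "\<forall>u\<ge>0. f u \<ge> 0"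
    and "f 0 = 0"
    and "\<forall>u>0. f u > 0"
    and "0 < \<epsilon>" and "\<epsilon> < 1"
    and "closed C" and "C \<subseteq> S4" and "C \<inter> E0 = {}"
  shows "\<exists>\<delta>>0. \<forall>U :: real^4^4. norm (U - U0 \<epsilon>) < \<delta> \<longrightarrow>
           (\<forall>x. is_solution f U x \<and> x 0 \<in> C \<longrightarrow> ((\<lambda>t. x t $ 4) \<longlongrightarrow> 0) at_top)"
proof -
  note fc = assms(1) and fnn = assms(2) and f0 = assms(3) and fpos = assms(4)
    and e = assms(5,6)
  have Ccomp: "compact C"
    using compact_Int_closed[OF compact_S4 assms(7)] assms(8) by (simp add: Int_absorb1)
  have CposN: "\<forall>x\<in>C. Nf x > 0"
  proof
    fix x assume x: "x \<in> C"
    then have "x \<in> S4" "x \<notin> E0" using assms(8,9) by auto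
    then have "Nf x \<noteq> 0" using N0_E0 by auto
    then show "Nf x > 0" using N_nn[of x] by linarith
  qed
  obtain c where c: "c > 0" "\<forall>x\<in>C. Nf x \<ge> c"
    using pos_min[OF Ccomp cont_Nf CposN] by auto
  define \<kappa> where "\<kappa> = (1-\<epsilon>)/96"
  have kp: "\<kappa> > 0" unfolding \<kappa>_def using e by simp
  define n2 where "n2 = min (min (1/8) (\<kappa>^2/3)) c"
  have n2: "0 < n2" "n2 \<le> 1/8" "3*n2 \<le> ((1-\<epsilon>)/96)^2" "n2 \<le> c"
    unfolding n2_def using c kp by (auto simp: \<kappa>_def)
  define K2 where "K2 = S4 \<inter> {x. n2 \<le> Nf x}"
  have K2c: "compact K2" unfolding K2_def by (rule compact_S4_N[OF closed_N_ge])
  have Gam0pos: "\<forall>x\<in>K2. Gam f (U0 \<epsilon>) x > 0"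
  proof
    fix x assume "x \<in> K2"
    then have x: "x \<in> S4" and N: "0 < Nf x" using n2 unfolding K2_def by auto
    have P: "0 \<le> Psi f u" for u using Psi_nonneg[OF fc f0 fnn] .
    have "Psi f (ex (U0 \<epsilon>) x 1) > 0 \<or> Psi f (ex (U0 \<epsilon>) x 2) > 0 \<or> Psi f (ex (U0 \<epsilon>) x 3) > 0"
      using exU0_pos[OF x e N] Psi_pos[OF fc f0 fpos] by blast
    then show "Gam f (U0 \<epsilon>) x > 0" unfolding Gam_def sum_4
      using P[of "ex (U0 \<epsilon>) x 1"] P[of "ex (U0 \<epsilon>) x 2"] P[of "ex (U0 \<epsilon>) x 3"]
        P[of "ex (U0 \<epsilon>) x 4"] by linarith
  qed
  have Gam0c: "continuous_on S (\<lambda>x. Gam f (U0 \<epsilon>) x)" for S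
    using cont_at_U[OF cont_Gam[OF fc f0], of S "U0 \<epsilon>"] by simp
  obtain \<alpha> where al: "\<alpha> > 0" "\<forall>x\<in>K2. Gam f (U0 \<epsilon>) x \<ge> \<alpha>"
    using pos_min[OF K2c Gam0c Gam0pos] by auto
  obtain s0 where s0: "s0 \<in> {0..1}" "\<forall>s\<in>{0..1}. f s \<le> f s0"
  proof -
    have "\<exists>s\<in>{0..1::real}. \<forall>y\<in>{0..1}. f y \<le> f s"
      by (rule continuous_attains_sup) (auto intro: continuous_on_subset[OF fc])
    then show ?thesis using that by blast
  qed
  define B where "B = f s0"
  have B: "\<forall>s\<in>{0..1}. f s \<le> B" "0 \<le> B" using s0 fnn unfolding B_def by auto
  define b where "b = min 1 (\<alpha> / (8*(B+1)))"
  have b: "0 < b" "b \<le> 1" "b * B \<le> \<alpha>/8"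
  proof -
    show "0 < b" "b \<le> 1" unfolding b_def using al B by auto
    have "b \<le> \<alpha> / (8*(B+1))" unfolding b_def by simp
    then have "b * B \<le> \<alpha> / (8*(B+1)) * B" using mult_right_mono B(2) by blast
    also have "\<dots> = \<alpha>/8 * (B/(B+1))" using B by simp
    also have "\<dots> \<le> \<alpha>/8 * 1" using al B by (intro mult_left_mono) auto
    finally show "b * B \<le> \<alpha>/8" by simp
  qed
  define n1 where "n1 = min (n2/2) (b^2/3)"
  have n1: "0 < n1" "n1 < n2" "3 * n1 \<le> b^2" unfolding n1_def using n2 b by auto
  have low: "\<forall>x\<in>S4. Nf x \<le> n1 \<longrightarrow> Gam f (U0 \<epsilon>) x \<le> \<alpha>/2"
  proof (intro ballI impI)
    fix x assume x: "x \<in> S4" and N: "Nf x \<le> n1"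
    have one: "Psi f (ex (U0 \<epsilon>) x i) \<le> b * B" if i: "ex (U0 \<epsilon>) x i ^ 2 \<le> 3 * Nf x" for i
    proof -
      have "ex (U0 \<epsilon>) x i ^ 2 \<le> b^2" using i N n1 by linarith
      then have le: "ex (U0 \<epsilon>) x i \<le> b" using power2_le_imp_le b by (meson less_imp_le)
      show ?thesis
      proof (cases "ex (U0 \<epsilon>) x i \<le> 0")
        case True then show ?thesis using Psi_zero[of f, OF f0] b B by simp
      next
        case False
        then have "Psi f (ex (U0 \<epsilon>) x i) \<le> ex (U0 \<epsilon>) x i * B"
          using Psi_le[OF fc f0 B(1)] le b B by auto
        also have "\<dots> \<le> b * B" using le B by (simp add: mult_right_mono)
        finally show ?thesis .
      qed
    qed
    note EF = exU0_facts[OF x e]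
    have "Psi f (ex (U0 \<epsilon>) x 4) = 0" using Psi_zero[of f, OF f0] exU0_4[OF x e] by simp
    then show "Gam f (U0 \<epsilon>) x \<le> \<alpha>/2" unfolding Gam_def sum_4
      using one[OF EF(4)] one[OF EF(5)] one[OF EF(6)] b al by linarith
  qed
  define K3 where "K3 = S4 \<inter> {x. n1 \<le> Nf x \<and> Nf x \<le> n2}"
  have K3c: "compact K3" unfolding K3_def by (rule compact_S4_N[OF closed_N_between])
  have G0pos: "\<forall>x\<in>K3. Gf f (U0 \<epsilon>) x > 0"
  proof
    fix x assume "x \<in> K3"
    then have x: "x \<in> S4" "n1 \<le> Nf x" "Nf x \<le> n2" unfolding K3_def by auto
    show "Gf f (U0 \<epsilon>) x > 0"
      by (rule G0_pos[OF f0 fnn fpos e x(1)]) (use x n1 n2 in auto)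
  qed
  have G0c: "continuous_on S (\<lambda>x. Gf f (U0 \<epsilon>) x)" for S
    using cont_at_U[OF cont_Gf[OF fc], of S "U0 \<epsilon>"] by simp
  obtain m where m: "m > 0" "\<forall>x\<in>K3. Gf f (U0 \<epsilon>) x \<ge> m"
    using pos_min[OF K3c G0c G0pos] by auto
  define K4 where "K4 = S4 \<inter> {x. n1 \<le> Nf x}"
  have K4c: "compact K4" unfolding K4_def by (rule compact_S4_N[OF closed_N_ge])
  have F0pos: "\<forall>x\<in>K4. Fs f (U0 \<epsilon>) x > 0"
  proof
    fix x assume "x \<in> K4"
    then have x: "x \<in> S4" and N: "0 < Nf x" using n1 unfolding K4_def by auto
    have P: "0 \<le> f (kfun (U0 \<epsilon>) x i)" for i using fnn by (simp add: kfun_def)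
    have "f (kfun (U0 \<epsilon>) x 1) > 0 \<or> f (kfun (U0 \<epsilon>) x 2) > 0 \<or> f (kfun (U0 \<epsilon>) x 3) > 0"
      using exU0_pos[OF x e N] fpos unfolding kfun_ex by auto
    then show "Fs f (U0 \<epsilon>) x > 0" unfolding Fs_def sum_4
      using P[of 1] P[of 2] P[of 3] P[of 4] by linarith
  qed
  have F0c: "continuous_on S (\<lambda>x. Fs f (U0 \<epsilon>) x)" for S
    using cont_at_U[OF cont_Fs[OF fc], of S "U0 \<epsilon>"] by simp
  obtain F0 where F0: "F0 > 0" "\<forall>x\<in>K4. Fs f (U0 \<epsilon>) x \<ge> F0"
    using pos_min[OF K4c F0c F0pos] by auto
  obtain d1 where d1: "d1 > 0" "\<forall>U x. dist U (U0 \<epsilon>) < d1 \<longrightarrow> x \<in> S4 \<longrightarrow>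
      \<bar>Gam f U x - Gam f (U0 \<epsilon>) x\<bar> < \<alpha>/8"
    using unif_close[OF compact_S4 cont_Gam[OF fc f0], of "\<alpha>/8" "U0 \<epsilon>"] al by auto
  obtain d2 where d2: "d2 > 0" "\<forall>U x. dist U (U0 \<epsilon>) < d2 \<longrightarrow> x \<in> K3 \<longrightarrow>
      \<bar>Gf f U x - Gf f (U0 \<epsilon>) x\<bar> < m"
    using unif_close[OF K3c cont_Gf[OF fc], of m "U0 \<epsilon>"] m by auto
  have eta3: "(1-\<epsilon>)*n1/6 > 0" using e n1 by simp
  obtain d3 where d3: "d3 > 0" "\<forall>U x. dist U (U0 \<epsilon>) < d3 \<longrightarrow> x \<in> K4 \<longrightarrow>
      \<bar>ex U x 4 - ex (U0 \<epsilon>) x 4\<bar> < (1-\<epsilon>)*n1/6"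
    using unif_close[OF K4c cont_ex, of "(1-\<epsilon>)*n1/6" "U0 \<epsilon>"] eta3 by auto
  obtain d4 where d4: "d4 > 0" "\<forall>U x. dist U (U0 \<epsilon>) < d4 \<longrightarrow> x \<in> K4 \<longrightarrow>
      \<bar>Fs f U x - Fs f (U0 \<epsilon>) x\<bar> < F0/2"
    using unif_close[OF K4c cont_Fs[OF fc], of "F0/2" "U0 \<epsilon>"] F0 by auto
  define \<delta> where "\<delta> = min (min d1 d2) (min d3 d4)"
  have dp: "\<delta> > 0" unfolding \<delta>_def using d1 d2 d3 d4 by simp
  show ?thesis
  proof (intro exI[of _ \<delta>] conjI allI impI dp)
    fix U :: "real^4^4" and x :: "real \<Rightarrow> real^4"
    assume U: "norm (U - U0 \<epsilon>) < \<delta>" and sol: "is_solution f U x \<and> x 0 \<in> C"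
    have dU: "dist U (U0 \<epsilon>) < d1" "dist U (U0 \<epsilon>) < d2" "dist U (U0 \<epsilon>) < d3" "dist U (U0 \<epsilon>) < d4"
      using U unfolding \<delta>_def dist_norm by auto
    have xs: "\<And>t. t \<ge> 0 \<Longrightarrow> x t \<in> S4"
      and xd: "\<And>t. t \<ge> 0 \<Longrightarrow> (x has_vector_derivative vfield f U (x t)) (at t within {0..})"
      using sol unfolding is_solution_def by auto
    have x0C: "x 0 \<in> C" using sol by simp
    have "continuous (at t within {0..}) x" if "t \<in> {0..}" for t
      using has_vector_derivative_continuous[OF xd[of t]] that by simp
    then have xcont: "continuous_on {0..} x" using continuous_on_eq_continuous_within by blast
    have Nc: "continuous_on {0..} (\<lambda>t. Nf (x t))"
      by (rule continuous_on_compose2[OF cont_Nf xcont]) auto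
    have Gc: "continuous_on {0..} (\<lambda>t. Gam f U (x t))"
      using continuous_on_compose2[OF cont_Gam[OF fc f0, of UNIV] continuous_on_Pair[OF continuous_on_const xcont], of U]
      by simp
    have at_t: "at t within {0..} = at t" if "t > 0" for t :: real
      by (rule at_within_interior) (use that in simp)
    have A: "\<forall>t\<ge>0. n1 < Nf (x t)"
    proof (rule ccontr)
      assume "\<not> (\<forall>t\<ge>0. n1 < Nf (x t))"
      then obtain t' where t': "t' \<ge> 0" "Nf (x t') \<le> n1" by auto
      define T1 where "T1 = {0..t'} \<inter> (\<lambda>t. Nf (x t)) -` {..n1}"
      have T1cl: "closed T1" unfolding T1_def
        by (rule continuous_closed_preimage[OF continuous_on_subset[OF Nc]]) auto
      have T1ne: "t' \<in> T1" unfolding T1_def using t' by auto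
      have T1b: "bdd_below T1" unfolding T1_def by (auto intro: bdd_belowI[of _ 0])
      define t1 where "t1 = Inf T1"
      have t1T: "t1 \<in> T1" unfolding t1_def using closed_contains_Inf[OF _ T1b T1cl] T1ne by blast
      then have t1: "0 \<le> t1" "t1 \<le> t'" "Nf (x t1) \<le> n1" unfolding T1_def by auto
      have before: "n1 < Nf (x t)" if "0 \<le> t" "t < t1" for t
      proof (rule ccontr)
        assume "\<not> n1 < Nf (x t)"
        then have "t \<in> T1" unfolding T1_def using that t1 by auto
        then have "t1 \<le> t" unfolding t1_def using cInf_lower[OF _ T1b] by blast
        then show False using that by simp
      qed
      have "c \<le> Nf (x 0)" using c(2) x0C by blast
      then have N0: "n2 \<le> Nf (x 0)" using n2(4) by linarith
      have "t1 \<noteq> 0" using t1 N0 n1 by auto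
      then have t1p: "t1 > 0" using t1 by simp
      define T2 where "T2 = {0..t1} \<inter> (\<lambda>t. Nf (x t)) -` {n2..}"
      have T2cl: "closed T2" unfolding T2_def
        by (rule continuous_closed_preimage[OF continuous_on_subset[OF Nc]]) auto
      have T2ne: "0 \<in> T2" unfolding T2_def using N0 t1p by auto
      have T2b: "bdd_above T2" unfolding T2_def by (auto intro: bdd_aboveI[of _ t1])
      define t0 where "t0 = Sup T2"
      have t0T: "t0 \<in> T2" unfolding t0_def using closed_contains_Sup[OF _ T2b T2cl] T2ne by blast
      then have t0: "0 \<le> t0" "t0 \<le> t1" "n2 \<le> Nf (x t0)" unfolding T2_def by auto
      have after: "Nf (x t) < n2" if "t0 < t" "t \<le> t1" for t
      proof (rule ccontr)
        assume "\<not> Nf (x t) < n2"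
        then have "t \<in> T2" unfolding T2_def using that t0 by auto
        then have "t \<le> t0" unfolding t0_def using cSup_upper[OF _ T2b] by blast
        then show False using that by simp
      qed
      have "t0 \<noteq> t1" using t0 t1 n1 by auto
      then have t01: "t0 < t1" using t0 by simp
      have mono: "Gam f U (x t0) \<le> Gam f U (x t1)"
      proof (rule DERIV_nonneg_imp_increasing_open[OF less_imp_le[OF t01]])
        fix t assume tt: "t0 < t" "t < t1"
        have tp: "t > 0" using tt t0 by simp
        have "x t \<in> K3" unfolding K3_def using xs[of t] tp before[of t] after[of t] tt by auto
        then have "\<bar>Gf f U (x t) - Gf f (U0 \<epsilon>) (x t)\<bar> < m" "Gf f (U0 \<epsilon>) (x t) \<ge> m"
          using d2(2) dU(2) m(2) by blast+
        then have "Gf f U (x t) > 0" by linarith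
        moreover have "((\<lambda>t. Gam f U (x t)) has_real_derivative Gf f U (x t)) (at t)"
          using Gam_deriv[OF fc f0 xd[of t]] tp at_t[OF tp] by simp
        ultimately show "\<exists>y. ((\<lambda>t. Gam f U (x t)) has_real_derivative y) (at t) \<and> 0 \<le> y"
          by (intro exI[of _ "Gf f U (x t)"]) auto
      next
        show "continuous_on {t0..t1} (\<lambda>t. Gam f U (x t))"
          by (rule continuous_on_subset[OF Gc]) (use t0 in auto)
      qed
      have "x t0 \<in> K2" unfolding K2_def using xs[of t0] t0 by auto
      then have "\<bar>Gam f U (x t0) - Gam f (U0 \<epsilon>) (x t0)\<bar> < \<alpha>/8" "Gam f (U0 \<epsilon>) (x t0) \<ge> \<alpha>"
        using al(2) d1(2) dU(1) xs[of t0] t0 by blast+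
      then have "Gam f U (x t0) \<ge> \<alpha> - \<alpha>/8" by linarith
      moreover have "\<bar>Gam f U (x t1) - Gam f (U0 \<epsilon>) (x t1)\<bar> < \<alpha>/8" "Gam f (U0 \<epsilon>) (x t1) \<le> \<alpha>/2"
        using low xs[of t1] t1 d1(2) dU(1) by blast+
      then have "Gam f U (x t1) \<le> \<alpha>/2 + \<alpha>/8" by linarith
      ultimately show False using mono al(1) by linarith
    qed
    have K4t: "x t \<in> K4" if "t \<ge> 0" for t unfolding K4_def using A xs that by auto
    have ex4: "ex U (x t) 4 < 0" if "t \<ge> 0" for t
    proof -
      have "\<bar>ex U (x t) 4 - ex (U0 \<epsilon>) (x t) 4\<bar> < (1-\<epsilon>)*n1/6" using d3(2) dU(3) K4t[OF that] by blast
      moreover have "ex (U0 \<epsilon>) (x t) 4 = -((1-\<epsilon>) * Nf (x t))/6"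
        unfolding exU0_facts(1)[OF xs[OF that] e] by (simp add: field_simps)
      moreover have "(1-\<epsilon>)*n1 \<le> (1-\<epsilon>) * Nf (x t)" using A that e by (intro mult_left_mono) auto
      ultimately show ?thesis by linarith
    qed
    have Fl: "Fs f U (x t) \<ge> F0/2" if "t \<ge> 0" for t
    proof -
      have "\<bar>Fs f U (x t) - Fs f (U0 \<epsilon>) (x t)\<bar> < F0/2" "Fs f (U0 \<epsilon>) (x t) \<ge> F0"
        using d4(2) dU(4) K4t[OF that] F0(2) by blast+
      then show ?thesis by linarith
    qed
    define k where "k = F0/2"
    have kp: "k > 0" unfolding k_def using F0 by simp
    define \<psi> where "\<psi> t = x t $ 4 * exp (k * t)" for t
    have psi_dec: "\<psi> t \<le> \<psi> 0" if "t \<ge> 0" for t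
    proof (rule DERIV_nonpos_imp_decreasing_open[OF that])
      fix s assume ss: "0 < s" "s < t"
      have d4': "((\<lambda>t. x t $ 4) has_real_derivative vfield f U (x s) $ 4) (at s)"
        using comp_deriv[OF xd[of s]] ss at_t[of s] by simp
      have v4: "vfield f U (x s) $ 4 = - (x s $ 4 * Fs f U (x s))"
        unfolding vfield_comp kfun_ex using ex4[of s] ss f0 by simp
      have "(\<psi> has_real_derivative
          (vfield f U (x s) $ 4) * exp (k * s) + x s $ 4 * (exp (k * s) * k)) (at s)"
        unfolding \<psi>_def[abs_def] by (intro derivative_eq_intros) (use d4' in auto)
      moreover have "(vfield f U (x s) $ 4) * exp (k * s) + x s $ 4 * (exp (k * s) * k)
         = x s $ 4 * exp (k * s) * (k - Fs f U (x s))"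
        unfolding v4 by (simp add: algebra_simps)
      moreover have "x s $ 4 * exp (k * s) * (k - Fs f U (x s)) \<le> 0"
        using S4_nn[OF xs[of s]] Fl[of s] ss unfolding k_def
        by (intro mult_nonneg_nonpos) auto
      ultimately show "\<exists>y. (\<psi> has_real_derivative y) (at s) \<and> y \<le> 0" by auto
    next
      have "continuous_on {0..t} (\<lambda>t. x t $ 4)"
        by (intro continuous_intros continuous_on_subset[OF xcont]) auto
      then show "continuous_on {0..t} \<psi>" unfolding \<psi>_def[abs_def]
        by (rule continuous_on_mult) (intro continuous_intros)
    qed
    have x04: "x 0 $ 4 \<le> 1"
      using S4_sum[OF xs[of 0]] S4_nn[OF xs[of 0], of 1] S4_nn[OF xs[of 0], of 2] S4_nn[OF xs[of 0], of 3]
      by simp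
    have bound: "x t $ 4 \<le> exp (- (k * t))" if "t \<ge> 0" for t
    proof -
      have "x t $ 4 * exp (k * t) \<le> 1" using psi_dec[OF that] x04 unfolding \<psi>_def by simp
      then have "x t $ 4 \<le> 1 / exp (k * t)" by (simp add: field_simps)
      then show ?thesis by (simp add: exp_minus inverse_eq_divide)
    qed
    have lim: "((\<lambda>t. exp (- (k * t))) \<longlongrightarrow> 0) at_top"
    proof -
      have "filterlim (\<lambda>t. k * t) at_top at_top"
        by (rule filterlim_tendsto_pos_mult_at_top[OF tendsto_const kp filterlim_ident])
      then have "filterlim (\<lambda>t. - (k * t)) at_bot at_top"
        by (rule filterlim_compose[OF filterlim_uminus_at_bot_at_top])
      then show ?thesis by (rule filterlim_compose[OF exp_at_bot])
    qed
    show "((\<lambda>t. x t $ 4) \<longlongrightarrow> 0) at_top"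
    proof (rule tendsto_sandwich[OF _ _ tendsto_const lim])
      show "\<forall>\<^sub>F t in at_top. 0 \<le> x t $ 4"
        using eventually_ge_at_top[of 0] by eventually_elim (use S4_nn xs in auto)
      show "\<forall>\<^sub>F t in at_top. x t $ 4 \<le> exp (- (k * t))"
        using eventually_ge_at_top[of 0] by eventually_elim (use bound in auto)
    qed
  qed
qed

end
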